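(* Let $G$ be a finite group, $\mathsf K$ a simplicial $G$-complex and $\mathsf K'$ a $G$-subcomplex of $\mathsf K$. Then $\mathsf K$ $G$-collapses onto $\mathsf K'$ if and only if there is an acyclic partial $G$-matching on $\mathcal F(\mathsf K)$ whose set of critical elements is exactly $\mathcal F(\mathsf K')$.
   Context: A simplicial $G$-complex is a simplicial complex with a right action of $G$ by simplicial automorphisms; a $G$-subcomplex is a $G$-invariant subcomplex. $\mathcal F(\mathsf K)$ is the poset of nonempty simplices of $\mathsf K$ ordered by inclusion; $x\succ y$ ($x$ covers $y$) means $y<x$ with nothing strictly between. A facet is a maximal simplex; a simplex $\sigma$ is free if it is a proper face of exactly one facet $\varphi_\sigma$. A collection of free simplices is independently free if no two distinct members have a common coface. For a free $\sigma$ with $\dim\varphi_\sigma=\dim\sigma+1$ and $\sigma G$ independently free, an elementary $G$-collapse replaces $\mathsf K$ by the subcomplex of simplices having no $\sigma g$ ($g\in G$) as a face. $\mathsf K$ $G$-collapses onto $\mathsf K'$ if there is a finite sequence of elementary $G$-collapses leading from $\mathsf K$ to $\mathsf K'$. A partial $G$-matching on $\mathcal F(\mathsf K)$ is a pair $(\Sigma,\mu)$ of a $G$-invariant subset $\Sigma\subseteq\mathcal F(\mathsf K)$ and a $G$-equivariant injection $\mu:\Sigma\to\mathcal F(\mathsf K)\setminus\Sigma$ with $\mu(x)\succ x$ for all $x\in\Sigma$. Its critical elements are those of $\mathcal F(\mathsf K)\setminus(\Sigma\cup\mu(\Sigma))$. It is acyclic if there is no sequence of distinct $x_0,\dots,x_t\in\Sigma$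 ($t\ge1$) with $\mu(x_0)\succ x_1,\ \mu(x_1)\succ x_2,\dots,\mu(x_{t-1})\succ x_t$ and $\mu(x_t)\succ x_0$. *)

theory Defs
  imports "HOL-Algebra.Group"
begin

definition simplicial_complex :: "'v set set \<Rightarrow> bool" where
  "simplicial_complex K \<longleftrightarrow> finite K \<and>
     (\<forall>\<sigma>\<in>K. finite \<sigma> \<and> \<sigma> \<noteq> {}) \<and>
     (\<forall>\<sigma>\<in>K. \<forall>\<tau>. \<tau> \<subseteq> \<sigma> \<and> \<tau> \<noteq> {} \<longrightarrow> \<tau> \<in> K)"

definition sact :: "('v \<Rightarrow> 'g \<Rightarrow> 'v) \<Rightarrow> 'v set \<Rightarrow> 'g \<Rightarrow> 'v set" where
  "sact act \<sigma> g = (\<lambda>v. act v g) ` \<sigma>"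

definition G_invariant :: "('g, 'b) monoid_scheme \<Rightarrow> ('v \<Rightarrow> 'g \<Rightarrow> 'v) \<Rightarrow> 'v set set \<Rightarrow> bool" where
  "G_invariant G act S \<longleftrightarrow> (\<forall>\<sigma>\<in>S. \<forall>g\<in>carrier G. sact act \<sigma> g \<in> S)"

definition simplicial_G_complex ::
  "('g, 'b) monoid_scheme \<Rightarrow> ('v \<Rightarrow> 'g \<Rightarrow> 'v) \<Rightarrow> 'v set set \<Rightarrow> bool" where
  "simplicial_G_complex G act K \<longleftrightarrow> simplicial_complex K \<and>
     (\<forall>v\<in>\<Union>K. act v \<one>\<^bsub>G\<^esub> = v) \<and>
     (\<forall>v\<in>\<Union>K. \<forall>g\<in>carrier G. \<forall>h\<in>carrier G. act (act v g) h = act v (g \<otimes>\<^bsub>G\<^esub> h)) \<and>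
     G_invariant G act K"

definition G_subcomplex ::
  "('g, 'b) monoid_scheme \<Rightarrow> ('v \<Rightarrow> 'g \<Rightarrow> 'v) \<Rightarrow> 'v set set \<Rightarrow> 'v set set \<Rightarrow> bool" where
  "G_subcomplex G act K K' \<longleftrightarrow> K' \<subseteq> K \<and> simplicial_complex K' \<and> G_invariant G act K'"

definition orbit :: "('g, 'b) monoid_scheme \<Rightarrow> ('v \<Rightarrow> 'g \<Rightarrow> 'v) \<Rightarrow> 'v set \<Rightarrow> 'v set set" where
  "orbit G act \<sigma> = {sact act \<sigma> g | g. g \<in> carrier G}"

definition facet :: "'v set set \<Rightarrow> 'v set \<Rightarrow> bool" where
  "facet K \<phi> \<longleftrightarrow> \<phi> \<in> K \<and> \<not> (\<exists>\<tau>\<in>K. \<phi> \<subset> \<tau>)"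

definition free_simplex :: "'v set set \<Rightarrow> 'v set \<Rightarrow> bool" where
  "free_simplex K \<sigma> \<longleftrightarrow> \<sigma> \<in> K \<and> (\<exists>!\<phi>. facet K \<phi> \<and> \<sigma> \<subset> \<phi>)"

definition free_facet :: "'v set set \<Rightarrow> 'v set \<Rightarrow> 'v set" where
  "free_facet K \<sigma> = (THE \<phi>. facet K \<phi> \<and> \<sigma> \<subset> \<phi>)"

definition independently_free :: "'v set set \<Rightarrow> 'v set set \<Rightarrow> bool" where
  "independently_free K S \<longleftrightarrow> (\<forall>\<sigma>\<in>S. free_simplex K \<sigma>) \<and>
     (\<forall>\<sigma>\<in>S. \<forall>\<tau>\<in>S. \<sigma> \<noteq> \<tau> \<longrightarrow> \<not> (\<exists>\<rho>\<in>K. \<sigma> \<subseteq> \<rho> \<and> \<tau> \<subseteq> \<rho>))"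

text \<open>dim = card - 1, so dim phi = dim sigma + 1 iff card phi = card sigma + 1.\<close>
definition elementary_G_collapse ::
  "('g, 'b) monoid_scheme \<Rightarrow> ('v \<Rightarrow> 'g \<Rightarrow> 'v) \<Rightarrow> 'v set set \<Rightarrow> 'v set set \<Rightarrow> bool" where
  "elementary_G_collapse G act K K2 \<longleftrightarrow> (\<exists>\<sigma>. free_simplex K \<sigma> \<and>
     card (free_facet K \<sigma>) = card \<sigma> + 1 \<and>
     independently_free K (orbit G act \<sigma>) \<and>
     K2 = {\<rho>\<in>K. \<forall>g\<in>carrier G. \<not> sact act \<sigma> g \<subseteq> \<rho>})"

definition G_collapses ::
  "('g, 'b) monoid_scheme \<Rightarrow> ('v \<Rightarrow> 'g \<Rightarrow> 'v) \<Rightarrow> 'v set set \<Rightarrow> 'v set set \<Rightarrow> bool" where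
  "G_collapses G act K K' \<longleftrightarrow> (elementary_G_collapse G act)\<^sup>*\<^sup>* K K'"

definition covers :: "'v set set \<Rightarrow> 'v set \<Rightarrow> 'v set \<Rightarrow> bool" where
  "covers K x y \<longleftrightarrow> x \<in> K \<and> y \<in> K \<and> y \<subset> x \<and> \<not> (\<exists>z\<in>K. y \<subset> z \<and> z \<subset> x)"

definition partial_G_matching ::
  "('g, 'b) monoid_scheme \<Rightarrow> ('v \<Rightarrow> 'g \<Rightarrow> 'v) \<Rightarrow> 'v set set \<Rightarrow> 'v set set
     \<Rightarrow> ('v set \<Rightarrow> 'v set) \<Rightarrow> bool" where
  "partial_G_matching G act K S \<mu> \<longleftrightarrow> S \<subseteq> K \<and> G_invariant G act S \<and>
     \<mu> ` S \<subseteq> K - S \<and> inj_on \<mu> S \<and>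
     (\<forall>x\<in>S. \<forall>g\<in>carrier G. \<mu> (sact act x g) = sact act (\<mu> x) g) \<and>
     (\<forall>x\<in>S. covers K (\<mu> x) x)"

definition critical :: "'v set set \<Rightarrow> 'v set set \<Rightarrow> ('v set \<Rightarrow> 'v set) \<Rightarrow> 'v set set" where
  "critical K S \<mu> = K - (S \<union> \<mu> ` S)"

definition acyclic_matching :: "'v set set \<Rightarrow> 'v set set \<Rightarrow> ('v set \<Rightarrow> 'v set) \<Rightarrow> bool" where
  "acyclic_matching K S \<mu> \<longleftrightarrow> \<not> (\<exists>xs. length xs \<ge> 2 \<and> distinct xs \<and> set xs \<subseteq> S \<and>
      (\<forall>i. Suc i < length xs \<longrightarrow> covers K (\<mu> (xs ! i)) (xs ! Suc i)) \<and>
      covers K (\<mu> (last xs)) (hd xs))"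

end

theory Submission
  imports Defs
begin

lemma sc_parts:
  assumes "simplicial_complex L"
  shows "finite L" "\<And>\<sigma>. \<sigma> \<in> L \<Longrightarrow> finite \<sigma>" "\<And>\<sigma>. \<sigma> \<in> L \<Longrightarrow> \<sigma> \<noteq> {}"
    "\<And>\<sigma> \<tau>. \<sigma> \<in> L \<Longrightarrow> \<tau> \<subseteq> \<sigma> \<Longrightarrow> \<tau> \<noteq> {} \<Longrightarrow> \<tau> \<in> L"
  using assms unfolding simplicial_complex_def by blast+

lemma covers_char:
  assumes sc: "simplicial_complex L"
  shows "covers L x y \<longleftrightarrow> x \<in> L \<and> y \<noteq> {} \<and> y \<subset> x \<and> card x = Suc (card y)"
proof
  assume c: "covers L x y"
  hence xL: "x \<in> L" and yL: "y \<in> L" and yx: "y \<subset> x" and nz: "\<not> (\<exists>z\<in>L. y \<subset> z \<and> z \<subset> x)"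
    unfolding covers_def by blast+
  have fx: "finite x" using sc_parts(2)[OF sc xL] .
  have ny: "y \<noteq> {}" using sc_parts(3)[OF sc yL] .
  have lt: "card y < card x" using psubset_card_mono[OF fx yx] .
  show "x \<in> L \<and> y \<noteq> {} \<and> y \<subset> x \<and> card x = Suc (card y)"
  proof (rule ccontr)
    assume "\<not> ?thesis"
    hence big: "Suc (card y) < card x" using xL ny yx lt by linarith
    obtain v where v: "v \<in> x" "v \<notin> y" using yx by blast
    define z where "z = insert v y"
    have fy: "finite y" using fx yx finite_subset by blast
    have zx: "z \<subseteq> x" using v yx z_def by blast
    have zne: "z \<noteq> {}" using z_def by blast
    have zL: "z \<in> L" using sc_parts(4)[OF sc xL zx zne] .
    have cz: "card z = Suc (card y)" using fy v z_def by simp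
    have "y \<subset> z" using v z_def by blast
    moreover have "z \<subset> x" using zx cz big by auto
    ultimately show False using nz zL by blast
  qed
next
  assume h: "x \<in> L \<and> y \<noteq> {} \<and> y \<subset> x \<and> card x = Suc (card y)"
  have fx: "finite x" using h sc_parts(2)[OF sc] by blast
  have yL: "y \<in> L" using h sc_parts(4)[OF sc] by blast
  have "\<not> (\<exists>z\<in>L. y \<subset> z \<and> z \<subset> x)"
  proof
    assume "\<exists>z\<in>L. y \<subset> z \<and> z \<subset> x"
    then obtain z where yz: "y \<subset> z" and zx: "z \<subset> x" by blast
    hence fz: "finite z" using fx by (auto intro: finite_subset)
    have "card y < card z" by (rule psubset_card_mono[OF fz yz])
    moreover have "card z < card x" by (rule psubset_card_mono[OF fx zx])
    ultimately show False using h by simp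
  qed
  thus "covers L x y" using h yL unfolding covers_def by blast
qed

lemma cycle_from_pred:
  assumes fT: "finite T" and x0: "x0 \<in> T" and fT2: "\<And>x. x \<in> T \<Longrightarrow> f x \<in> T" and fne: "\<And>x. x \<in> T \<Longrightarrow> f x \<noteq> x"
  shows "\<exists>ys. 2 \<le> length ys \<and> distinct ys \<and> set ys \<subseteq> T \<and>
     (\<forall>k. Suc k < length ys \<longrightarrow> ys ! Suc k = f (ys ! k)) \<and> hd ys = f (last ys)"
proof -
  define z where "z k = (f ^^ k) x0" for k
  have zT: "\<And>k. z k \<in> T" unfolding z_def
  proof -
    fix k show "(f ^^ k) x0 \<in> T" by (induction k) (auto simp: x0 fT2)
  qed
  have zS: "\<And>k. z (Suc k) = f (z k)" unfolding z_def by simp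
  have "\<not> inj_on z {0..card T}"
  proof
    assume inj: "inj_on z {0..card T}"
    have "z ` {0..card T} \<subseteq> T" using zT by blast
    hence "card (z ` {0..card T}) \<le> card T" using card_mono[OF fT] by blast
    moreover have "card (z ` {0..card T}) = Suc (card T)" using card_image[OF inj] by simp
    ultimately show False by simp
  qed
  then obtain a b where ab: "a \<noteq> b" "z a = z b" unfolding inj_on_def by blast
  define P where "P j = (\<exists>i<j. z i = z j)" for j
  have Pex: "\<exists>j. P j"
  proof (cases "a < b")
    case True thus ?thesis using ab unfolding P_def by blast
  next
    case False hence "b < a" using ab by simp
    thus ?thesis using ab unfolding P_def by metis
  qed
  define j where "j = (LEAST j. P j)"
  have Pj: "P j" unfolding j_def using Pex by (metis LeastI)
  then obtain i where ij: "i < j" "z i = z j" unfolding P_def by blast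
  have minj: "\<And>a b. a < b \<Longrightarrow> b < j \<Longrightarrow> z a \<noteq> z b"
  proof
    fix a b assume "a < b" "b < j" "z a = z b"
    hence "P b" unfolding P_def by blast
    hence "j \<le> b" unfolding j_def by (rule Least_le)
    thus False using \<open>b < j\<close> by simp
  qed
  define ys where "ys = map z [i..<j]"
  have len: "length ys = j - i" unfolding ys_def by simp
  have nth: "\<And>k. k < j - i \<Longrightarrow> ys ! k = z (i + k)" unfolding ys_def by simp
  have j1: "j \<noteq> Suc i"
  proof
    assume "j = Suc i"
    hence "z i = f (z i)" using ij zS by simp
    thus False using fne[OF zT[of i]] by simp
  qed
  have L2: "2 \<le> length ys" using len ij j1 by simp
  have dis: "distinct ys" unfolding distinct_conv_nth
  proof (intro allI impI)
    fix p q assume pq: "p < length ys" "q < length ys" "p \<noteq> q"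
    have e: "ys ! p = z (i + p)" "ys ! q = z (i + q)" using pq nth len by simp_all
    show "ys ! p \<noteq> ys ! q"
    proof (cases "p < q")
      case True
      have "z (i + p) \<noteq> z (i + q)" by (rule minj) (use True pq len in simp_all)
      thus ?thesis using e by simp
    next
      case False
      hence "q < p" using pq by simp
      have "z (i + q) \<noteq> z (i + p)" by (rule minj) (use \<open>q < p\<close> pq len in simp_all)
      thus ?thesis using e by simp
    qed
  qed
  have sub: "set ys \<subseteq> T" unfolding ys_def using zT by auto
  have step: "\<forall>k. Suc k < length ys \<longrightarrow> ys ! Suc k = f (ys ! k)"
    using nth len zS by simp
  have ne: "ys \<noteq> []" using L2 by auto
  have "hd ys = z i" using hd_conv_nth[OF ne] nth len ij by simp
  moreover have "last ys = z (j - 1)" using last_conv_nth[OF ne] nth len ij by simp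
  moreover have "z j = f (z (j - 1))" using zS[of "j - 1"] ij by simp
  ultimately have "hd ys = f (last ys)" using ij by simp
  thus ?thesis using L2 dis sub step by blast
qed

lemma cycle_from_pred_rev:
  assumes fT: "finite T" and x0: "x0 \<in> T" and fT2: "\<And>x. x \<in> T \<Longrightarrow> f x \<in> T" and fne: "\<And>x. x \<in> T \<Longrightarrow> f x \<noteq> x"
  shows "\<exists>xs. 2 \<le> length xs \<and> distinct xs \<and> set xs \<subseteq> T \<and>
     (\<forall>k. Suc k < length xs \<longrightarrow> xs ! k = f (xs ! Suc k)) \<and> last xs = f (hd xs)"
proof -
  obtain ys where y: "2 \<le> length ys" "distinct ys" "set ys \<subseteq> T"
    "\<forall>k. Suc k < length ys \<longrightarrow> ys ! Suc k = f (ys ! k)" "hd ys = f (last ys)"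
    using cycle_from_pred[OF assms] by blast
  have ne: "ys \<noteq> []" using y(1) by auto
  have "\<forall>k. Suc k < length (rev ys) \<longrightarrow> rev ys ! k = f (rev ys ! Suc k)"
  proof (intro allI impI)
    fix k assume k: "Suc k < length (rev ys)"
    have a: "rev ys ! k = ys ! (length ys - Suc k)" using k by (simp add: rev_nth)
    have b: "rev ys ! Suc k = ys ! (length ys - Suc (Suc k))" using k by (simp add: rev_nth)
    have "Suc (length ys - Suc (Suc k)) = length ys - Suc k" using k by simp
    thus "rev ys ! k = f (rev ys ! Suc k)" using a b y(4) k by (metis diff_less length_rev zero_less_Suc less_le_trans not_le not_less_eq_eq)
  qed
  moreover have "last (rev ys) = f (hd (rev ys))" using y(5) ne by (simp add: hd_rev last_rev)
  ultimately show ?thesis using y by (intro exI[of _ "rev ys"]) auto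
qed

locale gcx =
  fixes G :: "('g, 'b) monoid_scheme" and act :: "'v \<Rightarrow> 'g \<Rightarrow> 'v" and K :: "'v set set"
  assumes grp: "group G" and cx: "simplicial_G_complex G act K"
begin

abbreviation "V \<equiv> \<Union>K"

lemma cx_conj: "simplicial_complex K \<and> (\<forall>v\<in>V. act v \<one>\<^bsub>G\<^esub> = v) \<and>
  (\<forall>v\<in>V. \<forall>g\<in>carrier G. \<forall>h\<in>carrier G. act (act v g) h = act v (g \<otimes>\<^bsub>G\<^esub> h)) \<and>
  G_invariant G act K"
  using cx unfolding simplicial_G_complex_def .

lemmas cx_parts = cx_conj[THEN conjunct1] cx_conj[THEN conjunct2, THEN conjunct1]
  cx_conj[THEN conjunct2, THEN conjunct2, THEN conjunct1] cx_conj[THEN conjunct2, THEN conjunct2, THEN conjunct2]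

lemma Kinv: "\<sigma> \<in> K \<Longrightarrow> g \<in> carrier G \<Longrightarrow> sact act \<sigma> g \<in> K"
  using cx_parts(4) unfolding G_invariant_def by blast

lemma act_mem: "v \<in> V \<Longrightarrow> g \<in> carrier G \<Longrightarrow> act v g \<in> V"
proof -
  assume a: "v \<in> V" "g \<in> carrier G"
  then obtain \<rho> where r: "\<rho> \<in> K" "v \<in> \<rho>" by blast
  have "sact act \<rho> g \<in> K" using Kinv[OF r(1) a(2)] .
  moreover have "act v g \<in> sact act \<rho> g" using r(2) unfolding sact_def by (rule imageI)
  ultimately show ?thesis by (rule UnionI)
qed

lemma act_comp: "v \<in> V \<Longrightarrow> g \<in> carrier G \<Longrightarrow> h \<in> carrier G \<Longrightarrow> act (act v g) h = act v (g \<otimes>\<^bsub>G\<^esub> h)"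
  using cx_parts(3) by blast

lemma act_one: "v \<in> V \<Longrightarrow> act v \<one>\<^bsub>G\<^esub> = v"
  using cx_parts(2) by blast

lemma act_inv: "v \<in> V \<Longrightarrow> g \<in> carrier G \<Longrightarrow> act (act v g) (inv\<^bsub>G\<^esub> g) = v"
proof -
  assume a: "v \<in> V" "g \<in> carrier G"
  have i: "inv\<^bsub>G\<^esub> g \<in> carrier G" using grp a(2) by (simp add: group.inv_closed)
  have "act (act v g) (inv\<^bsub>G\<^esub> g) = act v (g \<otimes>\<^bsub>G\<^esub> inv\<^bsub>G\<^esub> g)" using act_comp[OF a i] .
  also have "g \<otimes>\<^bsub>G\<^esub> inv\<^bsub>G\<^esub> g = \<one>\<^bsub>G\<^esub>" using grp a(2) by (simp add: group.r_inv)
  finally show ?thesis using act_one[OF a(1)] by simp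
qed

lemma act_inj: "g \<in> carrier G \<Longrightarrow> inj_on (\<lambda>v. act v g) V"
proof (rule inj_onI)
  fix x y assume g: "g \<in> carrier G" and xy: "x \<in> V" "y \<in> V" "act x g = act y g"
  have "x = act (act x g) (inv\<^bsub>G\<^esub> g)" using act_inv[OF xy(1) g] by simp
  also have "\<dots> = act (act y g) (inv\<^bsub>G\<^esub> g)" using xy(3) by simp
  also have "\<dots> = y" using act_inv[OF xy(2) g] .
  finally show "x = y" .
qed

lemma sact_comp: "\<rho> \<subseteq> V \<Longrightarrow> g \<in> carrier G \<Longrightarrow> h \<in> carrier G \<Longrightarrow> sact act (sact act \<rho> g) h = sact act \<rho> (g \<otimes>\<^bsub>G\<^esub> h)"
proof -
  assume a: "\<rho> \<subseteq> V" "g \<in> carrier G" "h \<in> carrier G"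
  have "\<And>x. x \<in> \<rho> \<Longrightarrow> act (act x g) h = act x (g \<otimes>\<^bsub>G\<^esub> h)" using a act_comp by blast
  thus ?thesis by (simp add: sact_def image_image)
qed

lemma sact_inv: "\<rho> \<subseteq> V \<Longrightarrow> g \<in> carrier G \<Longrightarrow> sact act (sact act \<rho> g) (inv\<^bsub>G\<^esub> g) = \<rho>"
  unfolding sact_def image_image using act_inv by (simp add: subset_iff)

lemma sact_V: "\<rho> \<subseteq> V \<Longrightarrow> g \<in> carrier G \<Longrightarrow> sact act \<rho> g \<subseteq> V"
proof -
  assume a: "\<rho> \<subseteq> V" "g \<in> carrier G"
  have "\<And>x. x \<in> \<rho> \<Longrightarrow> act x g \<in> V" using a act_mem[of _ g] subsetD[OF a(1)] by simp
  thus ?thesis unfolding sact_def image_subset_iff by simp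
qed

lemma sact_card: "\<rho> \<subseteq> V \<Longrightarrow> g \<in> carrier G \<Longrightarrow> card (sact act \<rho> g) = card \<rho>"
proof -
  assume a: "\<rho> \<subseteq> V" "g \<in> carrier G"
  have "inj_on (\<lambda>v. act v g) \<rho>" using inj_on_subset[OF act_inj[OF a(2)] a(1)] .
  thus ?thesis unfolding sact_def by (rule card_image)
qed

lemma sact_mono: "\<rho> \<subseteq> \<tau> \<Longrightarrow> sact act \<rho> g \<subseteq> sact act \<tau> g"
  unfolding sact_def by auto

lemma sact_le: "\<rho> \<subseteq> V \<Longrightarrow> \<tau> \<subseteq> V \<Longrightarrow> g \<in> carrier G \<Longrightarrow> sact act \<rho> g \<subseteq> sact act \<tau> g \<Longrightarrow> \<rho> \<subseteq> \<tau>"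
proof -
  assume a: "\<rho> \<subseteq> V" "\<tau> \<subseteq> V" "g \<in> carrier G" "sact act \<rho> g \<subseteq> sact act \<tau> g"
  have "sact act (sact act \<rho> g) (inv\<^bsub>G\<^esub> g) \<subseteq> sact act (sact act \<tau> g) (inv\<^bsub>G\<^esub> g)"
    by (rule sact_mono) (rule a(4))
  thus ?thesis using sact_inv[OF a(1) a(3)] sact_inv[OF a(2) a(3)] by simp
qed

lemma sact_eq: "\<rho> \<subseteq> V \<Longrightarrow> \<tau> \<subseteq> V \<Longrightarrow> g \<in> carrier G \<Longrightarrow> sact act \<rho> g = sact act \<tau> g \<Longrightarrow> \<rho> = \<tau>"
proof -
  assume a: "\<rho> \<subseteq> V" "\<tau> \<subseteq> V" "g \<in> carrier G" "sact act \<rho> g = sact act \<tau> g"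
  show ?thesis using sact_le[OF a(1) a(2) a(3)] sact_le[OF a(2) a(1) a(3)] a(4) by auto
qed

lemma sact_psub: "\<rho> \<subset> \<tau> \<Longrightarrow> \<tau> \<subseteq> V \<Longrightarrow> g \<in> carrier G \<Longrightarrow> sact act \<rho> g \<subset> sact act \<tau> g"
proof -
  assume a: "\<rho> \<subset> \<tau>" "\<tau> \<subseteq> V" "g \<in> carrier G"
  have r: "\<rho> \<subseteq> V" using a by auto
  have "sact act \<rho> g \<subseteq> sact act \<tau> g" using a(1) sact_mono by auto
  moreover have "sact act \<rho> g \<noteq> sact act \<tau> g" using sact_eq[OF r a(2) a(3)] a(1) by auto
  ultimately show ?thesis by auto
qed

lemma sact_ne: "\<rho> \<noteq> {} \<Longrightarrow> sact act \<rho> g \<noteq> {}"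
  unfolding sact_def by auto

definition cpx where "cpx L \<longleftrightarrow> L \<subseteq> K \<and> simplicial_complex L \<and> G_invariant G act L"

lemma cpx_V: "cpx L \<Longrightarrow> x \<in> L \<Longrightarrow> x \<subseteq> V"
  unfolding cpx_def by auto

lemma cpx_inv: "cpx L \<Longrightarrow> x \<in> L \<Longrightarrow> g \<in> carrier G \<Longrightarrow> sact act x g \<in> L"
  unfolding cpx_def G_invariant_def by auto

lemma cpx_inv_rev: "cpx L \<Longrightarrow> sact act x g \<in> L \<Longrightarrow> x \<subseteq> V \<Longrightarrow> g \<in> carrier G \<Longrightarrow> x \<in> L"
proof -
  assume a: "cpx L" "sact act x g \<in> L" "x \<subseteq> V" "g \<in> carrier G"
  have "inv\<^bsub>G\<^esub> g \<in> carrier G" using grp a(4) by (simp add: group.inv_closed)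
  hence "sact act (sact act x g) (inv\<^bsub>G\<^esub> g) \<in> L" using cpx_inv a by blast
  thus ?thesis using sact_inv[OF a(3) a(4)] by simp
qed

lemma inv_S_rev: "G_invariant G act S \<Longrightarrow> sact act x g \<in> S \<Longrightarrow> x \<subseteq> V \<Longrightarrow> g \<in> carrier G \<Longrightarrow> x \<in> S"
proof -
  assume a: "G_invariant G act S" "sact act x g \<in> S" "x \<subseteq> V" "g \<in> carrier G"
  have "inv\<^bsub>G\<^esub> g \<in> carrier G" using grp a(4) by (simp add: group.inv_closed)
  hence "sact act (sact act x g) (inv\<^bsub>G\<^esub> g) \<in> S" using a unfolding G_invariant_def by blast
  thus ?thesis using sact_inv[OF a(3) a(4)] by simp
qed

lemma sact_inv2: "\<rho> \<subseteq> V \<Longrightarrow> g \<in> carrier G \<Longrightarrow> sact act (sact act \<rho> (inv\<^bsub>G\<^esub> g)) g = \<rho>"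
proof -
  assume a: "\<rho> \<subseteq> V" "g \<in> carrier G"
  have i: "inv\<^bsub>G\<^esub> g \<in> carrier G" using grp a(2) by (simp add: group.inv_closed)
  have "inv\<^bsub>G\<^esub> (inv\<^bsub>G\<^esub> g) = g" using grp a(2) by (simp add: group.inv_inv)
  thus ?thesis using sact_inv[OF a(1) i] by simp
qed

lemma inv_cl: "g \<in> carrier G \<Longrightarrow> inv\<^bsub>G\<^esub> g \<in> carrier G"
  using grp by (simp add: group.inv_closed)

lemma mult_cl: "g \<in> carrier G \<Longrightarrow> h \<in> carrier G \<Longrightarrow> g \<otimes>\<^bsub>G\<^esub> h \<in> carrier G"
  using grp by (simp add: group.subgroup_self subgroup.m_closed)

lemma orbit_iff: "x \<in> orbit G act \<sigma> \<longleftrightarrow> (\<exists>g\<in>carrier G. x = sact act \<sigma> g)"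
  unfolding orbit_def by blast

lemma cpx_sc: "cpx L \<Longrightarrow> simplicial_complex L"
  unfolding cpx_def by blast

lemma cpx_sub: "cpx L \<Longrightarrow> L \<subseteq> K"
  unfolding cpx_def by blast

definition good where "good L \<sigma> \<phi> \<longleftrightarrow> \<sigma> \<in> L \<and> \<phi> \<in> L \<and> \<sigma> \<subset> \<phi> \<and> card \<phi> = Suc (card \<sigma>) \<and>
  (\<forall>g\<in>carrier G. \<forall>\<tau>\<in>L. sact act \<sigma> g \<subset> \<tau> \<longrightarrow> \<tau> = sact act \<phi> g) \<and>
  (\<forall>g\<in>carrier G. \<forall>h\<in>carrier G. sact act \<sigma> g \<noteq> sact act \<sigma> h \<longrightarrow> sact act \<phi> g \<noteq> sact act \<phi> h)"

definition rem where "rem L \<sigma> = {\<rho>\<in>L. \<forall>g\<in>carrier G. \<not> sact act \<sigma> g \<subseteq> \<rho>}"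

context
  fixes L \<sigma> \<phi>
  assumes cL: "cpx L" and gd: "good L \<sigma> \<phi>"
begin

lemma g_sL: "\<sigma> \<in> L" and g_pL: "\<phi> \<in> L" and g_sp: "\<sigma> \<subset> \<phi>" and g_card: "card \<phi> = Suc (card \<sigma>)"
  and g_free: "\<And>g \<tau>. g \<in> carrier G \<Longrightarrow> \<tau> \<in> L \<Longrightarrow> sact act \<sigma> g \<subset> \<tau> \<Longrightarrow> \<tau> = sact act \<phi> g"
  and g_ind: "\<And>g h. g \<in> carrier G \<Longrightarrow> h \<in> carrier G \<Longrightarrow> sact act \<sigma> g \<noteq> sact act \<sigma> h \<Longrightarrow> sact act \<phi> g \<noteq> sact act \<phi> h"
  using gd unfolding good_def by blast+

lemma sV: "\<sigma> \<subseteq> V" using cpx_V[OF cL g_sL] .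
lemma pV: "\<phi> \<subseteq> V" using cpx_V[OF cL g_pL] .

lemma sgL: "g \<in> carrier G \<Longrightarrow> sact act \<sigma> g \<in> L" using cpx_inv[OF cL g_sL] .
lemma pgL: "g \<in> carrier G \<Longrightarrow> sact act \<phi> g \<in> L" using cpx_inv[OF cL g_pL] .
lemma sg_pg: "g \<in> carrier G \<Longrightarrow> sact act \<sigma> g \<subset> sact act \<phi> g" using sact_psub[OF g_sp pV] .
lemma card_sg: "g \<in> carrier G \<Longrightarrow> card (sact act \<sigma> g) = card \<sigma>" using sact_card[OF sV] .
lemma card_pg: "g \<in> carrier G \<Longrightarrow> card (sact act \<phi> g) = Suc (card \<sigma>)" using sact_card[OF pV] g_card by simp
lemma sg_ne_pg: "g \<in> carrier G \<Longrightarrow> h \<in> carrier G \<Longrightarrow> sact act \<sigma> g \<noteq> sact act \<phi> h"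
  using card_sg card_pg by (metis n_not_Suc_n)

lemma contains_sg: "g \<in> carrier G \<Longrightarrow> \<rho> \<in> L \<Longrightarrow> sact act \<sigma> g \<subseteq> \<rho> \<Longrightarrow> \<rho> = sact act \<sigma> g \<or> \<rho> = sact act \<phi> g"
  using g_free by blast

lemma rem_sub: "rem L \<sigma> \<subseteq> L" unfolding rem_def by blast

lemma not_rem: "\<rho> \<in> L \<Longrightarrow> \<rho> \<notin> rem L \<sigma> \<longleftrightarrow> (\<exists>g\<in>carrier G. \<rho> = sact act \<sigma> g \<or> \<rho> = sact act \<phi> g)"
proof
  assume r: "\<rho> \<in> L" "\<rho> \<notin> rem L \<sigma>"
  then obtain g where g: "g \<in> carrier G" "sact act \<sigma> g \<subseteq> \<rho>" unfolding rem_def by blast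
  thus "\<exists>g\<in>carrier G. \<rho> = sact act \<sigma> g \<or> \<rho> = sact act \<phi> g" using contains_sg[OF g(1) r(1) g(2)] by blast
next
  assume "\<exists>g\<in>carrier G. \<rho> = sact act \<sigma> g \<or> \<rho> = sact act \<phi> g"
  then obtain g where g: "g \<in> carrier G" "\<rho> = sact act \<sigma> g \<or> \<rho> = sact act \<phi> g" by blast
  have "sact act \<sigma> g \<subseteq> \<rho>" using g sg_pg[OF g(1)] by blast
  thus "\<rho> \<notin> rem L \<sigma>" unfolding rem_def using g(1) by blast
qed

lemma cpx_rem: "cpx (rem L \<sigma>)"
proof -
  have sc: "simplicial_complex L" using cpx_sc[OF cL] .
  have sub: "rem L \<sigma> \<subseteq> L" by (rule rem_sub)
  have "simplicial_complex (rem L \<sigma>)"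
    unfolding simplicial_complex_def
  proof (intro conjI ballI allI impI)
    show "finite (rem L \<sigma>)" using finite_subset[OF sub sc_parts(1)[OF sc]] .
  next
    fix x assume "x \<in> rem L \<sigma>" thus "finite x" using sub sc_parts(2)[OF sc] by blast
  next
    fix x assume "x \<in> rem L \<sigma>" thus "x \<noteq> {}" using sub sc_parts(3)[OF sc] by blast
  next
    fix x \<tau> assume x: "x \<in> rem L \<sigma>" and t: "\<tau> \<subseteq> x \<and> \<tau> \<noteq> {}"
    have xL: "x \<in> L" and nx: "\<forall>g\<in>carrier G. \<not> sact act \<sigma> g \<subseteq> x" using x unfolding rem_def by blast+
    have "\<tau> \<in> L" using sc_parts(4)[OF sc xL] t by blast
    moreover have "\<forall>g\<in>carrier G. \<not> sact act \<sigma> g \<subseteq> \<tau>" using nx t by blast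
    ultimately show "\<tau> \<in> rem L \<sigma>" unfolding rem_def by blast
  qed
  moreover have "G_invariant G act (rem L \<sigma>)"
    unfolding G_invariant_def
  proof (intro ballI)
    fix x h assume x: "x \<in> rem L \<sigma>" and h: "h \<in> carrier G"
    have xL: "x \<in> L" and nx: "\<forall>g\<in>carrier G. \<not> sact act \<sigma> g \<subseteq> x" using x unfolding rem_def by blast+
    have xV: "x \<subseteq> V" using cpx_V[OF cL xL] .
    have "\<forall>g\<in>carrier G. \<not> sact act \<sigma> g \<subseteq> sact act x h"
    proof (intro ballI notI)
      fix g assume g: "g \<in> carrier G" and le: "sact act \<sigma> g \<subseteq> sact act x h"
      have "sact act (sact act \<sigma> g) (inv\<^bsub>G\<^esub> h) \<subseteq> sact act (sact act x h) (inv\<^bsub>G\<^esub> h)"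
        using sact_mono[OF le] .
      also have "\<dots> = x" using sact_inv[OF xV h] .
      finally have "sact act \<sigma> (g \<otimes>\<^bsub>G\<^esub> inv\<^bsub>G\<^esub> h) \<subseteq> x" using sact_comp[OF sV g inv_cl[OF h]] by simp
      thus False using nx mult_cl[OF g inv_cl[OF h]] by blast
    qed
    thus "sact act x h \<in> rem L \<sigma>" unfolding rem_def using cpx_inv[OF cL xL h] by blast
  qed
  moreover have "rem L \<sigma> \<subseteq> K" using sub cpx_sub[OF cL] by blast
  ultimately show ?thesis unfolding cpx_def by blast
qed


lemma sg_free_facet: "g \<in> carrier G \<Longrightarrow> facet L (sact act \<phi> g)"
  unfolding facet_def
proof (intro conjI notI)
  assume g: "g \<in> carrier G"
  show "sact act \<phi> g \<in> L" using pgL[OF g] .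
  assume "\<exists>\<tau>\<in>L. sact act \<phi> g \<subset> \<tau>"
  then obtain \<tau> where t: "\<tau> \<in> L" "sact act \<phi> g \<subset> \<tau>" by blast
  have "sact act \<sigma> g \<subset> \<tau>" using sg_pg[OF g] t(2) by blast
  hence "\<tau> = sact act \<phi> g" using g_free[OF g t(1)] by blast
  thus False using t(2) by blast
qed

lemma sg_free: "g \<in> carrier G \<Longrightarrow> free_simplex L (sact act \<sigma> g) \<and> free_facet L (sact act \<sigma> g) = sact act \<phi> g"
proof -
  assume g: "g \<in> carrier G"
  have P: "facet L (sact act \<phi> g) \<and> sact act \<sigma> g \<subset> sact act \<phi> g" using sg_free_facet[OF g] sg_pg[OF g] by blast
  have U: "\<And>\<psi>. facet L \<psi> \<and> sact act \<sigma> g \<subset> \<psi> \<Longrightarrow> \<psi> = sact act \<phi> g"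
  proof -
    fix \<psi> assume a: "facet L \<psi> \<and> sact act \<sigma> g \<subset> \<psi>"
    hence "\<psi> \<in> L" unfolding facet_def by blast
    thus "\<psi> = sact act \<phi> g" using g_free[OF g] a by blast
  qed
  have E: "\<exists>!\<psi>. facet L \<psi> \<and> sact act \<sigma> g \<subset> \<psi>" using P U by blast
  have "free_simplex L (sact act \<sigma> g)" unfolding free_simplex_def using E sgL[OF g] by blast
  moreover have "free_facet L (sact act \<sigma> g) = sact act \<phi> g" unfolding free_facet_def
    using the1_equality[OF E P] .
  ultimately show ?thesis by blast
qed

lemma good_elem: "elementary_G_collapse G act L (rem L \<sigma>)"
proof -
  have one: "\<one>\<^bsub>G\<^esub> \<in> carrier G" using grp by (simp add: group.is_monoid monoid.one_closed)
  have s1: "sact act \<sigma> \<one>\<^bsub>G\<^esub> = \<sigma>" using sV act_one unfolding sact_def by (simp add: subset_iff)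
  have p1: "sact act \<phi> \<one>\<^bsub>G\<^esub> = \<phi>" using pV act_one unfolding sact_def by (simp add: subset_iff)
  have fs: "free_simplex L \<sigma>" and ff: "free_facet L \<sigma> = \<phi>" using sg_free[OF one] s1 p1 by simp_all
  have indep: "independently_free L (orbit G act \<sigma>)"
    unfolding independently_free_def
  proof (intro conjI ballI impI notI)
    fix x assume "x \<in> orbit G act \<sigma>"
    then obtain g where g: "g \<in> carrier G" "x = sact act \<sigma> g" unfolding orbit_iff by blast
    thus "free_simplex L x" using sg_free[OF g(1)] by blast
  next
    fix x y assume x: "x \<in> orbit G act \<sigma>" and y: "y \<in> orbit G act \<sigma>" and xy: "x \<noteq> y"
      and ex: "\<exists>\<rho>\<in>L. x \<subseteq> \<rho> \<and> y \<subseteq> \<rho>"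
    obtain g where g: "g \<in> carrier G" "x = sact act \<sigma> g" using x by (auto simp: orbit_iff)
    obtain h where h: "h \<in> carrier G" "y = sact act \<sigma> h" using y by (auto simp: orbit_iff)
    obtain \<rho> where r: "\<rho> \<in> L" "x \<subseteq> \<rho>" "y \<subseteq> \<rho>" using ex by blast
    have A: "\<rho> = sact act \<sigma> g \<or> \<rho> = sact act \<phi> g" using contains_sg[OF g(1) r(1)] r(2) g(2) by blast
    have B: "\<rho> = sact act \<sigma> h \<or> \<rho> = sact act \<phi> h" using contains_sg[OF h(1) r(1)] r(3) h(2) by blast
    have xy': "sact act \<sigma> g \<noteq> sact act \<sigma> h" using xy g h by simp
    show False
    proof (cases "\<rho> = sact act \<sigma> g")
      case True
      thus False using B xy' sg_ne_pg[OF g(1) h(1)] by simp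
    next
      case False
      hence rg: "\<rho> = sact act \<phi> g" using A by simp
      thus False using B xy' sg_ne_pg[OF h(1) g(1)] g_ind[OF g(1) h(1)] by auto
    qed
  qed
  have "free_simplex L \<sigma> \<and> card (free_facet L \<sigma>) = card \<sigma> + 1 \<and>
     independently_free L (orbit G act \<sigma>) \<and>
     rem L \<sigma> = {\<rho>\<in>L. \<forall>g\<in>carrier G. \<not> sact act \<sigma> g \<subseteq> \<rho>}"
    using fs ff g_card indep unfolding rem_def by simp
  thus ?thesis unfolding elementary_G_collapse_def by (rule exI)
qed

end

lemma facet_exists:
  assumes sc: "simplicial_complex L" and t: "\<tau> \<in> L"
  shows "\<exists>\<psi>. facet L \<psi> \<and> \<tau> \<subseteq> \<psi>"
proof -
  let ?A = "{\<psi>\<in>L. \<tau> \<subseteq> \<psi>}"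
  have fA: "finite ?A" using sc_parts(1)[OF sc] by simp
  have "\<tau> \<in> ?A" using t by simp
  hence nA: "?A \<noteq> {}" by (rule ex_in_conv[THEN iffD1, OF exI])
  obtain m where m: "m \<in> ?A" "\<forall>b\<in>?A. m \<le> b \<longrightarrow> m = b" using finite_has_maximal[OF fA nA] by (elim bexE) 
  have "facet L m" unfolding facet_def using m by blast
  thus ?thesis using m by blast
qed

lemma elem_good:
  assumes cL: "cpx L" and e: "elementary_G_collapse G act L L2"
  shows "\<exists>\<sigma> \<phi>. good L \<sigma> \<phi> \<and> L2 = rem L \<sigma>"
proof -
  obtain \<sigma> where fs: "free_simplex L \<sigma>" and cd: "card (free_facet L \<sigma>) = card \<sigma> + 1"
    and ind: "independently_free L (orbit G act \<sigma>)" and L2: "L2 = rem L \<sigma>"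
    using e unfolding elementary_G_collapse_def rem_def by blast
  define \<phi> where "\<phi> = free_facet L \<sigma>"
  have sc: "simplicial_complex L" using cpx_sc[OF cL] .
  have sL: "\<sigma> \<in> L" and E: "\<exists>!\<psi>. facet L \<psi> \<and> \<sigma> \<subset> \<psi>" using fs unfolding free_simplex_def by blast+
  have P: "facet L \<phi> \<and> \<sigma> \<subset> \<phi>" unfolding \<phi>_def free_facet_def using theI'[OF E] .
  have pL: "\<phi> \<in> L" using P unfolding facet_def by blast
  have cdp: "card \<phi> = Suc (card \<sigma>)" using cd \<phi>_def by simp
  have fp: "finite \<phi>" using sc_parts(2)[OF sc pL] .
  have A: "\<And>\<tau>. \<tau> \<in> L \<Longrightarrow> \<sigma> \<subset> \<tau> \<Longrightarrow> \<tau> = \<phi>"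
  proof -
    fix \<tau> assume t: "\<tau> \<in> L" "\<sigma> \<subset> \<tau>"
    obtain \<psi> where psi: "facet L \<psi>" "\<tau> \<subseteq> \<psi>" using facet_exists[OF sc t(1)] by blast
    have "facet L \<psi> \<and> \<sigma> \<subset> \<psi>" using psi t(2) by blast
    hence "\<psi> = \<phi>" using E P by blast
    hence tp: "\<tau> \<subseteq> \<phi>" using psi by blast
    have ft: "finite \<tau>" using finite_subset[OF tp fp] .
    have "card \<sigma> < card \<tau>" using psubset_card_mono[OF ft t(2)] .
    moreover have "card \<tau> \<le> card \<phi>" using card_mono[OF fp tp] .
    ultimately have "card \<tau> = card \<phi>" using cdp by linarith
    thus "\<tau> = \<phi>" using card_subset_eq[OF fp tp] by blast
  qed
  have sV: "\<sigma> \<subseteq> V" using cpx_V[OF cL sL] .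
  have pV: "\<phi> \<subseteq> V" using cpx_V[OF cL pL] .
  have free: "\<forall>g\<in>carrier G. \<forall>\<tau>\<in>L. sact act \<sigma> g \<subset> \<tau> \<longrightarrow> \<tau> = sact act \<phi> g"
  proof (intro ballI impI)
    fix g \<tau> assume g: "g \<in> carrier G" and t: "\<tau> \<in> L" and st: "sact act \<sigma> g \<subset> \<tau>"
    have tV: "\<tau> \<subseteq> V" using cpx_V[OF cL t] .
    have t'L: "sact act \<tau> (inv\<^bsub>G\<^esub> g) \<in> L" using cpx_inv[OF cL t inv_cl[OF g]] .
    have "sact act (sact act \<sigma> g) (inv\<^bsub>G\<^esub> g) \<subset> sact act \<tau> (inv\<^bsub>G\<^esub> g)"
      using sact_psub[OF st tV inv_cl[OF g]] .
    hence "\<sigma> \<subset> sact act \<tau> (inv\<^bsub>G\<^esub> g)" using sact_inv[OF sV g] by simp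
    hence "sact act \<tau> (inv\<^bsub>G\<^esub> g) = \<phi>" using A[OF t'L] by blast
    thus "\<tau> = sact act \<phi> g" using sact_inv2[OF tV g] by metis
  qed
  have indp: "\<forall>g\<in>carrier G. \<forall>h\<in>carrier G. sact act \<sigma> g \<noteq> sact act \<sigma> h \<longrightarrow> sact act \<phi> g \<noteq> sact act \<phi> h"
  proof (intro ballI impI notI)
    fix g h assume g: "g \<in> carrier G" and h: "h \<in> carrier G" and ne: "sact act \<sigma> g \<noteq> sact act \<sigma> h"
      and eq: "sact act \<phi> g = sact act \<phi> h"
    have "sact act \<sigma> g \<in> orbit G act \<sigma>" "sact act \<sigma> h \<in> orbit G act \<sigma>" using g h unfolding orbit_iff by blast+
    moreover have "sact act \<phi> g \<in> L" using cpx_inv[OF cL pL g] .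
    moreover have "sact act \<sigma> g \<subseteq> sact act \<phi> g" "sact act \<sigma> h \<subseteq> sact act \<phi> g"
      using sact_mono[of \<sigma> \<phi>] P eq by blast+
    ultimately show False using ind ne unfolding independently_free_def by blast
  qed
  have "good L \<sigma> \<phi>" unfolding good_def using sL pL P cdp free indp by blast
  thus ?thesis using L2 by blast
qed


lemma pm_parts:
  assumes "partial_G_matching G act L S \<mu>"
  shows "S \<subseteq> L" "G_invariant G act S" "\<mu> ` S \<subseteq> L - S" "inj_on \<mu> S"
    "\<And>x g. x \<in> S \<Longrightarrow> g \<in> carrier G \<Longrightarrow> \<mu> (sact act x g) = sact act (\<mu> x) g"
    "\<And>x. x \<in> S \<Longrightarrow> covers L (\<mu> x) x"
  using assms unfolding partial_G_matching_def by blast+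

lemma ac_parts:
  assumes "acyclic_matching L S \<mu>" "length xs \<ge> 2" "distinct xs" "set xs \<subseteq> S"
    "\<And>i. Suc i < length xs \<Longrightarrow> covers L (\<mu> (xs ! i)) (xs ! Suc i)"
    "covers L (\<mu> (last xs)) (hd xs)"
  shows False
  using assms unfolding acyclic_matching_def by blast

context
  fixes L \<sigma> \<phi> S1 \<mu>1 K'
  assumes cL: "cpx L" and gd: "good L \<sigma> \<phi>"
    and m1: "partial_G_matching G act (rem L \<sigma>) S1 \<mu>1"
    and a1: "acyclic_matching (rem L \<sigma>) S1 \<mu>1"
    and c1: "critical (rem L \<sigma>) S1 \<mu>1 = K'"
begin

lemmas sgL' = sgL[OF cL gd] and pgL' = pgL[OF cL gd] and sg_pg' = sg_pg[OF cL gd]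
  and card_sg' = card_sg[OF cL gd] and card_pg' = card_pg[OF cL gd] and sg_ne_pg' = sg_ne_pg[OF cL gd]
  and contains_sg' = contains_sg[OF cL gd] and not_rem' = not_rem[OF cL gd] and cpx_rem' = cpx_rem[OF cL gd]
  and g_free' = g_free[OF cL gd] and g_ind' = g_ind[OF cL gd] and sV' = sV[OF cL gd] and pV' = pV[OF cL gd]
  and rem_sub' = rem_sub[OF cL gd]

lemma O_rem: "x \<in> orbit G act \<sigma> \<Longrightarrow> x \<notin> rem L \<sigma>"
  unfolding orbit_iff rem_def by blast

lemma P_rem: "g \<in> carrier G \<Longrightarrow> sact act \<phi> g \<notin> rem L \<sigma>"
  using not_rem' pgL' by blast

definition "mu x = (if x \<in> orbit G act \<sigma> then (THE \<tau>. \<tau> \<in> L \<and> x \<subset> \<tau>) else \<mu>1 x)"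

lemma mu_O: "g \<in> carrier G \<Longrightarrow> mu (sact act \<sigma> g) = sact act \<phi> g"
proof -
  assume g: "g \<in> carrier G"
  have o: "sact act \<sigma> g \<in> orbit G act \<sigma>" using g unfolding orbit_iff by blast
  have "(THE \<tau>. \<tau> \<in> L \<and> sact act \<sigma> g \<subset> \<tau>) = sact act \<phi> g"
  proof (rule the_equality)
    show "sact act \<phi> g \<in> L \<and> sact act \<sigma> g \<subset> sact act \<phi> g" using pgL'[OF g] sg_pg'[OF g] by blast
  next
    fix \<tau> assume "\<tau> \<in> L \<and> sact act \<sigma> g \<subset> \<tau>"
    thus "\<tau> = sact act \<phi> g" using g_free'[OF g] by blast
  qed
  thus ?thesis unfolding mu_def using o by simp
qed

lemma S1_rem: "S1 \<subseteq> rem L \<sigma>" using pm_parts(1)[OF m1] .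

lemma S1_notO: "x \<in> S1 \<Longrightarrow> x \<notin> orbit G act \<sigma>" using S1_rem O_rem by blast

lemma mu_S1: "x \<in> S1 \<Longrightarrow> mu x = \<mu>1 x" unfolding mu_def using S1_notO by simp

lemma mu1_rem: "x \<in> S1 \<Longrightarrow> \<mu>1 x \<in> rem L \<sigma> \<and> \<mu>1 x \<notin> S1" using pm_parts(3)[OF m1] by blast

lemma scL: "simplicial_complex L" using cpx_sc[OF cL] .
lemma scR: "simplicial_complex (rem L \<sigma>)" using cpx_sc[OF cpx_rem'] .

lemma fwd_matching: "partial_G_matching G act L (S1 \<union> orbit G act \<sigma>) mu"
  unfolding partial_G_matching_def
proof (intro conjI ballI)
  have "orbit G act \<sigma> \<subseteq> L"
  proof
    fix x assume "x \<in> orbit G act \<sigma>"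
    then obtain g where "g \<in> carrier G" "x = sact act \<sigma> g" unfolding orbit_iff by blast
    thus "x \<in> L" using sgL' by simp
  qed
  thus "S1 \<union> orbit G act \<sigma> \<subseteq> L" using S1_rem rem_sub' by blast
next
  show "G_invariant G act (S1 \<union> orbit G act \<sigma>)" unfolding G_invariant_def
  proof (intro ballI)
    fix x g assume x: "x \<in> S1 \<union> orbit G act \<sigma>" and g: "g \<in> carrier G"
    show "sact act x g \<in> S1 \<union> orbit G act \<sigma>"
    proof (cases "x \<in> S1")
      case True thus ?thesis using pm_parts(2)[OF m1] g unfolding G_invariant_def by blast
    next
      case False
      then obtain h where h: "h \<in> carrier G" "x = sact act \<sigma> h" using x by (auto simp: orbit_iff)
      have "sact act x g = sact act \<sigma> (h \<otimes>\<^bsub>G\<^esub> g)" using h sact_comp[OF sV' h(1) g] by simp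
      thus ?thesis using mult_cl[OF h(1) g] by (auto simp: orbit_iff)
    qed
  qed
next
  show "mu ` (S1 \<union> orbit G act \<sigma>) \<subseteq> L - (S1 \<union> orbit G act \<sigma>)"
  proof
    fix y assume "y \<in> mu ` (S1 \<union> orbit G act \<sigma>)"
    then obtain x where x: "x \<in> S1 \<union> orbit G act \<sigma>" "y = mu x" by blast
    show "y \<in> L - (S1 \<union> orbit G act \<sigma>)"
    proof (cases "x \<in> S1")
      case True
      hence "y = \<mu>1 x" using x mu_S1 by simp
      thus ?thesis using mu1_rem[OF True] rem_sub' O_rem by blast
    next
      case False
      then obtain h where h: "h \<in> carrier G" "x = sact act \<sigma> h" using x by (auto simp: orbit_iff)
      hence y: "y = sact act \<phi> h" using x mu_O by simp
      have "y \<notin> S1" using y P_rem[OF h(1)] S1_rem by blast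
      moreover have "y \<notin> orbit G act \<sigma>" using y sg_ne_pg'[OF _ h(1)] by (auto simp: orbit_iff)
      ultimately show ?thesis using y pgL'[OF h(1)] by blast
    qed
  qed
next
  show "inj_on mu (S1 \<union> orbit G act \<sigma>)"
  proof (rule inj_onI)
    fix x y assume x: "x \<in> S1 \<union> orbit G act \<sigma>" and y: "y \<in> S1 \<union> orbit G act \<sigma>" and e: "mu x = mu y"
    show "x = y"
    proof (cases "x \<in> S1")
      case xT: True
      show ?thesis
      proof (cases "y \<in> S1")
        case True
        thus ?thesis using xT e mu_S1 pm_parts(4)[OF m1] by (metis inj_onD)
      next
        case False
        then obtain h where h: "h \<in> carrier G" "y = sact act \<sigma> h" using y by (auto simp: orbit_iff)
        have "mu y \<notin> rem L \<sigma>" using h mu_O P_rem by simp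
        moreover have "mu x \<in> rem L \<sigma>" using mu_S1[OF xT] mu1_rem[OF xT] by simp
        ultimately show ?thesis using e by simp
      qed
    next
      case xF: False
      then obtain g where g: "g \<in> carrier G" "x = sact act \<sigma> g" using x by (auto simp: orbit_iff)
      show ?thesis
      proof (cases "y \<in> S1")
        case True
        have "mu x \<notin> rem L \<sigma>" using g mu_O P_rem by simp
        moreover have "mu y \<in> rem L \<sigma>" using mu_S1[OF True] mu1_rem[OF True] by simp
        ultimately show ?thesis using e by simp
      next
        case False
        then obtain h where h: "h \<in> carrier G" "y = sact act \<sigma> h" using y by (auto simp: orbit_iff)
        have "sact act \<phi> g = sact act \<phi> h" using e g h mu_O by simp
        thus ?thesis using g_ind'[OF g(1) h(1)] g h by blast
      qed
    qed
  qed
next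
  fix x g assume x: "x \<in> S1 \<union> orbit G act \<sigma>" and g: "g \<in> carrier G"
  show "mu (sact act x g) = sact act (mu x) g"
  proof (cases "x \<in> S1")
    case True
    have xg: "sact act x g \<in> S1" using pm_parts(2)[OF m1] True g unfolding G_invariant_def by blast
    show ?thesis using mu_S1[OF True] mu_S1[OF xg] pm_parts(5)[OF m1 True g] by simp
  next
    case False
    then obtain h where h: "h \<in> carrier G" "x = sact act \<sigma> h" using x by (auto simp: orbit_iff)
    have "sact act x g = sact act \<sigma> (h \<otimes>\<^bsub>G\<^esub> g)" using h sact_comp[OF sV' h(1) g] by simp
    hence "mu (sact act x g) = sact act \<phi> (h \<otimes>\<^bsub>G\<^esub> g)" using mu_O[OF mult_cl[OF h(1) g]] by simp
    also have "\<dots> = sact act (sact act \<phi> h) g" using sact_comp[OF pV' h(1) g] by simp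
    also have "\<dots> = sact act (mu x) g" using h mu_O by simp
    finally show ?thesis .
  qed
next
  fix x assume x: "x \<in> S1 \<union> orbit G act \<sigma>"
  show "covers L (mu x) x"
  proof (cases "x \<in> S1")
    case True
    have "covers (rem L \<sigma>) (\<mu>1 x) x" using pm_parts(6)[OF m1 True] .
    hence "\<mu>1 x \<in> rem L \<sigma> \<and> x \<noteq> {} \<and> x \<subset> \<mu>1 x \<and> card (\<mu>1 x) = Suc (card x)" using covers_char[OF scR] by blast
    thus ?thesis using covers_char[OF scL] mu_S1[OF True] rem_sub' by auto
  next
    case False
    then obtain h where h: "h \<in> carrier G" "x = sact act \<sigma> h" using x by (auto simp: orbit_iff)
    have ne: "x \<noteq> {}" using sc_parts(3)[OF scL sgL'[OF h(1)]] h by simp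
    show ?thesis using covers_char[OF scL] h mu_O pgL' sg_pg' card_sg' card_pg' ne by simp
  qed
qed


lemma fwd_acyclic: "acyclic_matching L (S1 \<union> orbit G act \<sigma>) mu"
  unfolding acyclic_matching_def
proof
  assume "\<exists>xs. 2 \<le> length xs \<and> distinct xs \<and> set xs \<subseteq> S1 \<union> orbit G act \<sigma> \<and>
      (\<forall>i. Suc i < length xs \<longrightarrow> covers L (mu (xs ! i)) (xs ! Suc i)) \<and> covers L (mu (last xs)) (hd xs)"
  then obtain xs where len: "2 \<le> length xs" and dis: "distinct xs" and sx: "set xs \<subseteq> S1 \<union> orbit G act \<sigma>"
    and cv: "\<And>i. Suc i < length xs \<Longrightarrow> covers L (mu (xs ! i)) (xs ! Suc i)"
    and cl: "covers L (mu (last xs)) (hd xs)" by blast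
  define n where "n = length xs"
  have pred: "\<And>j. j < n \<Longrightarrow> \<exists>p. p < n \<and> p \<noteq> j \<and> covers L (mu (xs ! p)) (xs ! j)"
  proof -
    fix j assume j: "j < n"
    show "\<exists>p. p < n \<and> p \<noteq> j \<and> covers L (mu (xs ! p)) (xs ! j)"
    proof (cases j)
      case 0
      have ne: "xs \<noteq> []" using len by auto
      have "last xs = xs ! (n - 1)" "hd xs = xs ! 0" using last_conv_nth[OF ne] hd_conv_nth[OF ne] n_def by simp_all
      thus ?thesis using cl 0 len n_def by (intro exI[of _ "n - 1"]) auto
    next
      case (Suc k)
      thus ?thesis using cv[of k] j n_def by (intro exI[of _ k]) auto
    qed
  qed
  have allS1: "\<And>j. j < n \<Longrightarrow> xs ! j \<in> S1"
  proof (rule ccontr)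
    fix j assume j: "j < n" and nS: "xs ! j \<notin> S1"
    have "xs ! j \<in> S1 \<union> orbit G act \<sigma>" using sx j n_def nth_mem by blast
    then obtain g where g: "g \<in> carrier G" "xs ! j = sact act \<sigma> g" using nS by (auto simp: orbit_iff)
    obtain p where p: "p < n" "p \<noteq> j" "covers L (mu (xs ! p)) (xs ! j)" using pred[OF j] by blast
    have cc: "mu (xs ! p) \<in> L \<and> xs ! j \<subset> mu (xs ! p)" using p(3) covers_char[OF scL] by blast
    have xp: "xs ! p \<in> S1 \<union> orbit G act \<sigma>" using sx p(1) n_def nth_mem by blast
    show False
    proof (cases "xs ! p \<in> S1")
      case True
      have "mu (xs ! p) \<in> rem L \<sigma>" using mu_S1[OF True] mu1_rem[OF True] by simp
      moreover have "xs ! j \<noteq> {}" using sc_parts(3)[OF scL sgL'[OF g(1)]] g by simp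
      ultimately have "xs ! j \<in> rem L \<sigma>" using sc_parts(4)[OF scR] cc by blast
      thus False using g O_rem unfolding orbit_iff by blast
    next
      case False
      then obtain h where h: "h \<in> carrier G" "xs ! p = sact act \<sigma> h" using xp by (auto simp: orbit_iff)
      have mp: "mu (xs ! p) = sact act \<phi> h" using h mu_O by simp
      have "sact act \<sigma> g \<subseteq> sact act \<phi> h" using cc mp g by blast
      hence "sact act \<phi> h = sact act \<sigma> g \<or> sact act \<phi> h = sact act \<phi> g" using contains_sg'[OF g(1) pgL'[OF h(1)]] by blast
      hence "sact act \<phi> h = sact act \<phi> g" using sg_ne_pg'[OF g(1) h(1)] by metis
      hence "sact act \<sigma> h = sact act \<sigma> g" using g_ind'[OF h(1) g(1)] by blast
      hence "xs ! p = xs ! j" using g h by simp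
      thus False using dis p j n_def nth_eq_iff_index_eq by blast
    qed
  qed
  have sx1: "set xs \<subseteq> S1" using allS1 n_def by (auto simp: in_set_conv_nth)
  have cvr: "\<And>a b. a \<in> S1 \<Longrightarrow> covers L (mu a) b \<Longrightarrow> covers (rem L \<sigma>) (\<mu>1 a) b"
  proof -
    fix a b assume a: "a \<in> S1" and c: "covers L (mu a) b"
    have "\<mu>1 a \<in> rem L \<sigma>" using mu1_rem[OF a] by simp
    thus "covers (rem L \<sigma>) (\<mu>1 a) b" using c covers_char[OF scL] covers_char[OF scR] mu_S1[OF a] by simp
  qed
  have "\<And>i. Suc i < length xs \<Longrightarrow> covers (rem L \<sigma>) (\<mu>1 (xs ! i)) (xs ! Suc i)"
    using cvr cv sx1 nth_mem by (metis Suc_lessD subsetD)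
  moreover have "covers (rem L \<sigma>) (\<mu>1 (last xs)) (hd xs)"
    using cvr[OF _ cl] sx1 len by (metis last_in_set list.size(3) not_numeral_le_zero subsetD)
  ultimately show False using ac_parts[OF a1 len dis sx1] by blast
qed

lemma fwd_critical: "critical L (S1 \<union> orbit G act \<sigma>) mu = K'"
proof -
  have mu_img: "mu ` (S1 \<union> orbit G act \<sigma>) = \<mu>1 ` S1 \<union> {sact act \<phi> g | g. g \<in> carrier G}"
  proof
    show "mu ` (S1 \<union> orbit G act \<sigma>) \<subseteq> \<mu>1 ` S1 \<union> {sact act \<phi> g | g. g \<in> carrier G}"
    proof
      fix y assume "y \<in> mu ` (S1 \<union> orbit G act \<sigma>)"
      then obtain x where x: "x \<in> S1 \<union> orbit G act \<sigma>" "y = mu x" by blast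
      show "y \<in> \<mu>1 ` S1 \<union> {sact act \<phi> g | g. g \<in> carrier G}"
      proof (cases "x \<in> S1")
        case True thus ?thesis using x mu_S1 by simp
      next
        case False
        then obtain h where h: "h \<in> carrier G" "x = sact act \<sigma> h" using x by (auto simp: orbit_iff)
        thus ?thesis using x mu_O by auto
      qed
    qed
  next
    show "\<mu>1 ` S1 \<union> {sact act \<phi> g | g. g \<in> carrier G} \<subseteq> mu ` (S1 \<union> orbit G act \<sigma>)"
    proof
      fix y assume "y \<in> \<mu>1 ` S1 \<union> {sact act \<phi> g | g. g \<in> carrier G}"
      then consider (a) x where "x \<in> S1" "y = \<mu>1 x" | (b) g where "g \<in> carrier G" "y = sact act \<phi> g" by blast
      thus "y \<in> mu ` (S1 \<union> orbit G act \<sigma>)"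
      proof cases
        case a thus ?thesis using mu_S1 by (metis UnI1 image_eqI)
      next
        case b
        have "sact act \<sigma> g \<in> orbit G act \<sigma>" using b by (auto simp: orbit_iff)
        thus ?thesis using b mu_O by (metis UnI2 image_eqI)
      qed
    qed
  qed
  have Lsplit: "\<And>\<rho>. \<rho> \<in> L \<Longrightarrow> \<rho> \<notin> rem L \<sigma> \<longleftrightarrow> \<rho> \<in> orbit G act \<sigma> \<or> \<rho> \<in> {sact act \<phi> g | g. g \<in> carrier G}"
    using not_rem' by (auto simp: orbit_iff)
  have "L - ((S1 \<union> orbit G act \<sigma>) \<union> (\<mu>1 ` S1 \<union> {sact act \<phi> g | g. g \<in> carrier G})) = rem L \<sigma> - (S1 \<union> \<mu>1 ` S1)"
  proof (rule Set.set_eqI)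
    fix \<rho>
    show "\<rho> \<in> L - ((S1 \<union> orbit G act \<sigma>) \<union> (\<mu>1 ` S1 \<union> {sact act \<phi> g | g. g \<in> carrier G})) \<longleftrightarrow> \<rho> \<in> rem L \<sigma> - (S1 \<union> \<mu>1 ` S1)"
    proof
      assume r: "\<rho> \<in> L - ((S1 \<union> orbit G act \<sigma>) \<union> (\<mu>1 ` S1 \<union> {sact act \<phi> g | g. g \<in> carrier G}))"
      hence "\<rho> \<in> rem L \<sigma>" using Lsplit by blast
      thus "\<rho> \<in> rem L \<sigma> - (S1 \<union> \<mu>1 ` S1)" using r by blast
    next
      assume r: "\<rho> \<in> rem L \<sigma> - (S1 \<union> \<mu>1 ` S1)"
      hence "\<rho> \<in> L" using rem_sub' by blast
      thus "\<rho> \<in> L - ((S1 \<union> orbit G act \<sigma>) \<union> (\<mu>1 ` S1 \<union> {sact act \<phi> g | g. g \<in> carrier G}))"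
        using r Lsplit by blast
    qed
  qed
  thus ?thesis using c1 mu_img unfolding critical_def by simp
qed

end


lemma fwd:
  assumes "(elementary_G_collapse G act)\<^sup>*\<^sup>* L K'"
  shows "cpx L \<Longrightarrow> \<exists>S \<mu>. partial_G_matching G act L S \<mu> \<and> acyclic_matching L S \<mu> \<and> critical L S \<mu> = K'"
  using assms
proof (induction rule: converse_rtranclp_induct)
  case base
  have "partial_G_matching G act K' {} id" unfolding partial_G_matching_def G_invariant_def by simp
  moreover have "acyclic_matching K' {} id" unfolding acyclic_matching_def by auto
  moreover have "critical K' {} id = K'" unfolding critical_def by simp
  ultimately show ?case by blast
next
  case (step L L1)
  obtain \<sigma> \<phi> where gd: "good L \<sigma> \<phi>" and L1: "L1 = rem L \<sigma>" using elem_good[OF step.prems step.hyps(1)] by blast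
  have "cpx L1" using cpx_rem[OF step.prems gd] L1 by simp
  then obtain S1 \<mu>1 where m1: "partial_G_matching G act L1 S1 \<mu>1" and a1: "acyclic_matching L1 S1 \<mu>1"
    and c1: "critical L1 S1 \<mu>1 = K'" using step.IH by blast
  show ?case using fwd_matching[OF step.prems gd, of S1 \<mu>1 K'] fwd_acyclic[OF step.prems gd, of S1 \<mu>1 K']
    fwd_critical[OF step.prems gd, of S1 \<mu>1 K'] m1 a1 c1 L1 by blast
qed


lemma one_cl: "\<one>\<^bsub>G\<^esub> \<in> carrier G" using grp by (simp add: group.is_monoid monoid.one_closed)

lemma sact_one: "\<rho> \<subseteq> V \<Longrightarrow> sact act \<rho> \<one>\<^bsub>G\<^esub> = \<rho>"
  using act_one unfolding sact_def by (simp add: subset_iff)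

lemma self_orbit: "\<rho> \<subseteq> V \<Longrightarrow> \<rho> \<in> orbit G act \<rho>"
  unfolding orbit_iff using sact_one one_cl by metis

context
  fixes L S \<mu> K'
  assumes cL: "cpx L" and m: "partial_G_matching G act L S \<mu>"
    and a: "acyclic_matching L S \<mu>" and c: "critical L S \<mu> = K'"
    and sK': "simplicial_complex K'" and Sne: "S \<noteq> {}"
begin

lemma scL2: "simplicial_complex L" using cpx_sc[OF cL] .
lemmas mS = pm_parts(1)[OF m] and mI = pm_parts(2)[OF m] and mM = pm_parts(3)[OF m]
  and mInj = pm_parts(4)[OF m] and mEq = pm_parts(5)[OF m] and mC = pm_parts(6)[OF m]

lemma cov: "x \<in> S \<Longrightarrow> \<mu> x \<in> L \<and> x \<noteq> {} \<and> x \<subset> \<mu> x \<and> card (\<mu> x) = Suc (card x)"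
  using mC covers_char[OF scL2] by blast

lemma muL: "x \<in> S \<Longrightarrow> \<mu> x \<in> L \<and> \<mu> x \<notin> S" using mM by blast

lemma U_eq: "L - K' = S \<union> \<mu> ` S"
  using c mS mM unfolding critical_def by blast

lemma finL: "finite L" using sc_parts(1)[OF scL2] .

lemma exists_free: "\<exists>\<sigma>\<in>S. \<forall>\<tau>\<in>L. \<sigma> \<subset> \<tau> \<longrightarrow> \<tau> = \<mu> \<sigma>"
proof -
  define U where "U = S \<union> \<mu> ` S"
  have fU: "finite U" unfolding U_def using finite_subset[OF mS finL] by simp
  have neU: "U \<noteq> {}" unfolding U_def using Sne by blast
  define d where "d = Max (card ` U)"
  have dge: "\<And>y. y \<in> U \<Longrightarrow> card y \<le> d" unfolding d_def using fU by simp
  have "d \<in> card ` U" unfolding d_def using fU neU by (intro Max_in) auto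
  then obtain y where y: "y \<in> U" "card y = d" by blast
  have "y \<notin> S"
  proof
    assume yS: "y \<in> S"
    have "\<mu> y \<in> U" unfolding U_def using yS by blast
    hence "card (\<mu> y) \<le> d" by (rule dge)
    thus False using cov[OF yS] y by simp
  qed
  then obtain x0 where x0: "x0 \<in> S" "y = \<mu> x0" using y unfolding U_def by blast
  define T where "T = {x\<in>S. card (\<mu> x) = d}"
  have x0T: "x0 \<in> T" unfolding T_def using x0 y by simp
  have fT: "finite T" unfolding T_def using finite_subset[OF mS finL] by simp
  show ?thesis
  proof (rule ccontr)
    assume "\<not> ?thesis"
    hence nf: "\<And>\<sigma>. \<sigma> \<in> S \<Longrightarrow> \<exists>\<tau>\<in>L. \<sigma> \<subset> \<tau> \<and> \<tau> \<noteq> \<mu> \<sigma>" by blast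
    have predex: "\<And>\<sigma>. \<sigma> \<in> T \<Longrightarrow> \<exists>\<sigma>'. \<sigma>' \<in> T \<and> \<sigma>' \<noteq> \<sigma> \<and> covers L (\<mu> \<sigma>') \<sigma>"
    proof -
      fix \<sigma> assume sT: "\<sigma> \<in> T"
      have sS: "\<sigma> \<in> S" and sd: "card (\<mu> \<sigma>) = d" using sT unfolding T_def by blast+
      obtain \<tau> where t: "\<tau> \<in> L" "\<sigma> \<subset> \<tau>" "\<tau> \<noteq> \<mu> \<sigma>" using nf[OF sS] by blast
      have sK: "\<sigma> \<notin> K'" using c sS unfolding critical_def by blast
      have sne: "\<sigma> \<noteq> {}" using cov[OF sS] by blast
      have tK: "\<tau> \<notin> K'"
      proof
        assume "\<tau> \<in> K'"
        hence "\<sigma> \<in> K'" using sc_parts(4)[OF sK'] t(2) sne by blast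
        thus False using sK by simp
      qed
      have tU: "\<tau> \<in> U" unfolding U_def using U_eq t(1) tK by blast
      have ft: "finite \<tau>" using sc_parts(2)[OF scL2 t(1)] .
      have "card \<sigma> < card \<tau>" using psubset_card_mono[OF ft t(2)] .
      moreover have "card \<tau> \<le> d" using dge[OF tU] .
      moreover have "card (\<mu> \<sigma>) = Suc (card \<sigma>)" using cov[OF sS] by blast
      ultimately have td: "card \<tau> = d" using sd by simp
      have "\<tau> \<notin> S"
      proof
        assume tS: "\<tau> \<in> S"
        have "\<mu> \<tau> \<in> U" unfolding U_def using tS by blast
        hence "card (\<mu> \<tau>) \<le> d" by (rule dge)
        thus False using cov[OF tS] td by simp
      qed
      then obtain \<sigma>' where s': "\<sigma>' \<in> S" "\<tau> = \<mu> \<sigma>'" using tU unfolding U_def by blast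
      have "\<sigma>' \<in> T" unfolding T_def using s' td by simp
      moreover have "\<sigma>' \<noteq> \<sigma>" using s' t(3) by blast
      moreover have "covers L (\<mu> \<sigma>') \<sigma>"
        using covers_char[OF scL2] s' t sne td sd \<open>card (\<mu> \<sigma>) = Suc (card \<sigma>)\<close> by simp
      ultimately show "\<exists>\<sigma>'. \<sigma>' \<in> T \<and> \<sigma>' \<noteq> \<sigma> \<and> covers L (\<mu> \<sigma>') \<sigma>" by blast
    qed
    define f where "f \<sigma> = (SOME \<sigma>'. \<sigma>' \<in> T \<and> \<sigma>' \<noteq> \<sigma> \<and> covers L (\<mu> \<sigma>') \<sigma>)" for \<sigma>
    have fP: "\<And>\<sigma>. \<sigma> \<in> T \<Longrightarrow> f \<sigma> \<in> T \<and> f \<sigma> \<noteq> \<sigma> \<and> covers L (\<mu> (f \<sigma>)) \<sigma>"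
      unfolding f_def using predex by (rule someI_ex)
    obtain xs where xs: "2 \<le> length xs" "distinct xs" "set xs \<subseteq> T"
      "\<forall>k. Suc k < length xs \<longrightarrow> xs ! k = f (xs ! Suc k)" "last xs = f (hd xs)"
      using cycle_from_pred_rev[OF fT x0T, of f] fP by blast
    have sxS: "set xs \<subseteq> S" using xs(3) unfolding T_def by blast
    have ne: "xs \<noteq> []" using xs(1) by auto
    have "\<And>i. Suc i < length xs \<Longrightarrow> covers L (\<mu> (xs ! i)) (xs ! Suc i)"
    proof -
      fix i assume i: "Suc i < length xs"
      have "xs ! Suc i \<in> T" using xs(3) i nth_mem by blast
      thus "covers L (\<mu> (xs ! i)) (xs ! Suc i)" using fP xs(4) i by simp
    qed
    moreover have "covers L (\<mu> (last xs)) (hd xs)"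
    proof -
      have "hd xs \<in> T" using xs(3) ne hd_in_set by blast
      thus ?thesis using fP xs(5) by simp
    qed
    ultimately show False using ac_parts[OF a xs(1) xs(2) sxS] by blast
  qed
qed


context
  fixes \<sigma> assumes sS: "\<sigma> \<in> S" and fr: "\<forall>\<tau>\<in>L. \<sigma> \<subset> \<tau> \<longrightarrow> \<tau> = \<mu> \<sigma>"
begin

lemma sL2: "\<sigma> \<in> L" using sS mS by blast
lemma sV2: "\<sigma> \<subseteq> V" using cpx_V[OF cL sL2] .

lemma rev_good: "good L \<sigma> (\<mu> \<sigma>)"
  unfolding good_def
proof (intro conjI ballI impI)
  show "\<sigma> \<in> L" by (rule sL2)
  show "\<mu> \<sigma> \<in> L" "\<sigma> \<subset> \<mu> \<sigma>" "card (\<mu> \<sigma>) = Suc (card \<sigma>)" using cov[OF sS] by blast+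
next
  fix g \<tau> assume g: "g \<in> carrier G" and t: "\<tau> \<in> L" and st: "sact act \<sigma> g \<subset> \<tau>"
  have tV: "\<tau> \<subseteq> V" using cpx_V[OF cL t] .
  have t'L: "sact act \<tau> (inv\<^bsub>G\<^esub> g) \<in> L" using cpx_inv[OF cL t inv_cl[OF g]] .
  have "sact act (sact act \<sigma> g) (inv\<^bsub>G\<^esub> g) \<subset> sact act \<tau> (inv\<^bsub>G\<^esub> g)"
    using sact_psub[OF st tV inv_cl[OF g]] .
  hence "\<sigma> \<subset> sact act \<tau> (inv\<^bsub>G\<^esub> g)" using sact_inv[OF sV2 g] by simp
  hence "sact act \<tau> (inv\<^bsub>G\<^esub> g) = \<mu> \<sigma>" using fr t'L by blast
  thus "\<tau> = sact act (\<mu> \<sigma>) g" using sact_inv2[OF tV g] by metis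
next
  fix g h assume g: "g \<in> carrier G" and h: "h \<in> carrier G" and ne: "sact act \<sigma> g \<noteq> sact act \<sigma> h"
  show "sact act (\<mu> \<sigma>) g \<noteq> sact act (\<mu> \<sigma>) h"
  proof
    assume e: "sact act (\<mu> \<sigma>) g = sact act (\<mu> \<sigma>) h"
    have gS: "sact act \<sigma> g \<in> S" and hS: "sact act \<sigma> h \<in> S" using mI sS g h unfolding G_invariant_def by blast+
    have "\<mu> (sact act \<sigma> g) = \<mu> (sact act \<sigma> h)" using e mEq[OF sS g] mEq[OF sS h] by simp
    hence "sact act \<sigma> g = sact act \<sigma> h" using inj_onD[OF mInj _ gS hS] by blast
    thus False using ne by simp
  qed
qed

lemmas not_rem2 = not_rem[OF cL rev_good] and cpx_rem2 = cpx_rem[OF cL rev_good] and rem_sub2 = rem_sub[OF cL rev_good]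

lemma mu_sg: "g \<in> carrier G \<Longrightarrow> \<mu> (sact act \<sigma> g) = sact act (\<mu> \<sigma>) g" using mEq[OF sS] .

lemma gS_lem: "g \<in> carrier G \<Longrightarrow> sact act \<sigma> g \<in> S" using mI sS unfolding G_invariant_def by blast

lemma orbS: "orbit G act \<sigma> \<subseteq> S" using mI sS unfolding G_invariant_def orbit_def by blast

lemma rev_matching: "partial_G_matching G act (rem L \<sigma>) (S - orbit G act \<sigma>) \<mu>"
  unfolding partial_G_matching_def
proof (intro conjI ballI)
  show "S - orbit G act \<sigma> \<subseteq> rem L \<sigma>"
  proof
    fix x assume x: "x \<in> S - orbit G act \<sigma>"
    have xL: "x \<in> L" using x mS by blast
    show "x \<in> rem L \<sigma>"
    proof (rule ccontr)
      assume "x \<notin> rem L \<sigma>"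
      then obtain g where g: "g \<in> carrier G" "x = sact act \<sigma> g \<or> x = sact act (\<mu> \<sigma>) g" using not_rem2[OF xL] by blast
      show False
      proof (cases "x = sact act \<sigma> g")
        case True thus False using x g(1) by (auto simp: orbit_iff)
      next
        case False
        hence "x = \<mu> (sact act \<sigma> g)" using g mu_sg by simp
        moreover have "sact act \<sigma> g \<in> S" using gS_lem[OF g(1)] .
        ultimately show False using muL x by blast
      qed
    qed
  qed
next
  show "G_invariant G act (S - orbit G act \<sigma>)" unfolding G_invariant_def
  proof (intro ballI)
    fix x g assume x: "x \<in> S - orbit G act \<sigma>" and g: "g \<in> carrier G"
    have xS: "sact act x g \<in> S" using mI x g unfolding G_invariant_def by blast
    have xV: "x \<subseteq> V" using x mS cpx_V[OF cL] by blast
    have "sact act x g \<notin> orbit G act \<sigma>"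
    proof
      assume "sact act x g \<in> orbit G act \<sigma>"
      then obtain h where h: "h \<in> carrier G" "sact act x g = sact act \<sigma> h" by (auto simp: orbit_iff)
      have "x = sact act (sact act x g) (inv\<^bsub>G\<^esub> g)" using sact_inv[OF xV g] by simp
      also have "\<dots> = sact act \<sigma> (h \<otimes>\<^bsub>G\<^esub> inv\<^bsub>G\<^esub> g)" using h sact_comp[OF sV2 h(1) inv_cl[OF g]] by simp
      finally have "x \<in> orbit G act \<sigma>" using mult_cl[OF h(1) inv_cl[OF g]] by (auto simp: orbit_iff)
      thus False using x by blast
    qed
    thus "sact act x g \<in> S - orbit G act \<sigma>" using xS by blast
  qed
next
  show "\<mu> ` (S - orbit G act \<sigma>) \<subseteq> rem L \<sigma> - (S - orbit G act \<sigma>)"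
  proof
    fix y assume "y \<in> \<mu> ` (S - orbit G act \<sigma>)"
    then obtain x where x: "x \<in> S" "x \<notin> orbit G act \<sigma>" "y = \<mu> x" by blast
    have yL: "y \<in> L" and yS: "y \<notin> S" using muL[OF x(1)] x(3) by blast+
    have "y \<in> rem L \<sigma>"
    proof (rule ccontr)
      assume "y \<notin> rem L \<sigma>"
      then obtain g where g: "g \<in> carrier G" "y = sact act \<sigma> g \<or> y = sact act (\<mu> \<sigma>) g" using not_rem2[OF yL] by blast
      have gS: "sact act \<sigma> g \<in> S" using gS_lem[OF g(1)] .
      show False
      proof (cases "y = sact act \<sigma> g")
        case True thus False using yS gS by simp
      next
        case False
        hence "\<mu> x = \<mu> (sact act \<sigma> g)" using g mu_sg x(3) by simp
        hence "x = sact act \<sigma> g" using inj_onD[OF mInj _ x(1) gS] by blast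
        thus False using x(2) g(1) by (auto simp: orbit_iff)
      qed
    qed
    thus "y \<in> rem L \<sigma> - (S - orbit G act \<sigma>)" using yS by blast
  qed
next
  show "inj_on \<mu> (S - orbit G act \<sigma>)" using inj_on_subset[OF mInj] by blast
next
  fix x g assume "x \<in> S - orbit G act \<sigma>" "g \<in> carrier G"
  thus "\<mu> (sact act x g) = sact act (\<mu> x) g" using mEq by blast
next
  fix x assume x: "x \<in> S - orbit G act \<sigma>"
  have "\<mu> x \<in> rem L \<sigma>"
  proof (rule ccontr)
    assume n: "\<mu> x \<notin> rem L \<sigma>"
    have yL: "\<mu> x \<in> L" and yS: "\<mu> x \<notin> S" using muL x by blast+
    obtain g where g: "g \<in> carrier G" "\<mu> x = sact act \<sigma> g \<or> \<mu> x = sact act (\<mu> \<sigma>) g" using not_rem2[OF yL] n by blast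
    have gS: "sact act \<sigma> g \<in> S" using gS_lem[OF g(1)] .
    show False
    proof (cases "\<mu> x = sact act \<sigma> g")
      case True thus False using yS gS by simp
    next
      case False
      hence "\<mu> x = \<mu> (sact act \<sigma> g)" using g mu_sg by simp
      hence "x = sact act \<sigma> g" using inj_onD[OF mInj _ _ gS] x by blast
      thus False using x g(1) by (auto simp: orbit_iff)
    qed
  qed
  thus "covers (rem L \<sigma>) (\<mu> x) x" using cov[of x] x covers_char[OF cpx_sc[OF cpx_rem2]] by simp
qed

lemma rev_acyclic: "acyclic_matching (rem L \<sigma>) (S - orbit G act \<sigma>) \<mu>"
  unfolding acyclic_matching_def
proof
  assume "\<exists>xs. 2 \<le> length xs \<and> distinct xs \<and> set xs \<subseteq> S - orbit G act \<sigma> \<and>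
      (\<forall>i. Suc i < length xs \<longrightarrow> covers (rem L \<sigma>) (\<mu> (xs ! i)) (xs ! Suc i)) \<and> covers (rem L \<sigma>) (\<mu> (last xs)) (hd xs)"
  then obtain xs where len: "2 \<le> length xs" and dis: "distinct xs" and sx: "set xs \<subseteq> S - orbit G act \<sigma>"
    and cv: "\<And>i. Suc i < length xs \<Longrightarrow> covers (rem L \<sigma>) (\<mu> (xs ! i)) (xs ! Suc i)"
    and cl: "covers (rem L \<sigma>) (\<mu> (last xs)) (hd xs)" by blast
  have up: "\<And>a b. covers (rem L \<sigma>) a b \<Longrightarrow> covers L a b"
  proof -
    fix a b assume h: "covers (rem L \<sigma>) a b"
    have "a \<in> rem L \<sigma> \<and> b \<noteq> {} \<and> b \<subset> a \<and> card a = Suc (card b)" using h covers_char[OF cpx_sc[OF cpx_rem2]] by simp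
    moreover have "a \<in> rem L \<sigma> \<Longrightarrow> a \<in> L" using rem_sub2 by blast
    ultimately show "covers L a b" using covers_char[OF scL2] by simp
  qed
  have sx': "set xs \<subseteq> S" using sx by blast
  have c1: "\<And>i. Suc i < length xs \<Longrightarrow> covers L (\<mu> (xs ! i)) (xs ! Suc i)" using cv up by blast
  have c2: "covers L (\<mu> (last xs)) (hd xs)" using up[OF cl] .
  show False by (rule ac_parts[OF a len dis sx' c1 c2])
qed

lemma rev_critical: "critical (rem L \<sigma>) (S - orbit G act \<sigma>) \<mu> = K'"
proof -
  have "rem L \<sigma> - ((S - orbit G act \<sigma>) \<union> \<mu> ` (S - orbit G act \<sigma>)) = L - (S \<union> \<mu> ` S)"
  proof (rule Set.set_eqI)
    fix \<rho>
    show "\<rho> \<in> rem L \<sigma> - ((S - orbit G act \<sigma>) \<union> \<mu> ` (S - orbit G act \<sigma>)) \<longleftrightarrow> \<rho> \<in> L - (S \<union> \<mu> ` S)"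
    proof
      assume r: "\<rho> \<in> rem L \<sigma> - ((S - orbit G act \<sigma>) \<union> \<mu> ` (S - orbit G act \<sigma>))"
      have rL: "\<rho> \<in> L" using r rem_sub2 by blast
      have nO: "\<And>g. g \<in> carrier G \<Longrightarrow> \<rho> \<noteq> sact act \<sigma> g \<and> \<rho> \<noteq> sact act (\<mu> \<sigma>) g"
        using not_rem2[OF rL] r by blast
      have "\<rho> \<notin> orbit G act \<sigma>" using nO by (auto simp: orbit_iff)
      hence "\<rho> \<notin> S" using r by blast
      moreover have "\<rho> \<notin> \<mu> ` S"
      proof
        assume "\<rho> \<in> \<mu> ` S"
        then obtain x where x: "x \<in> S" "\<rho> = \<mu> x" by blast
        show False
        proof (cases "x \<in> orbit G act \<sigma>")
          case True
          then obtain g where g: "g \<in> carrier G" "x = sact act \<sigma> g" by (auto simp: orbit_iff)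
          thus False using nO[OF g(1)] mu_sg x by simp
        next
          case False thus False using r x by blast
        qed
      qed
      ultimately show "\<rho> \<in> L - (S \<union> \<mu> ` S)" using rL by blast
    next
      assume r: "\<rho> \<in> L - (S \<union> \<mu> ` S)"
      have "\<rho> \<in> rem L \<sigma>"
      proof (rule ccontr)
        assume "\<rho> \<notin> rem L \<sigma>"
        then obtain g where g: "g \<in> carrier G" "\<rho> = sact act \<sigma> g \<or> \<rho> = sact act (\<mu> \<sigma>) g" using not_rem2 r by blast
        have gS: "sact act \<sigma> g \<in> S" using gS_lem[OF g(1)] .
        show False using g gS r mu_sg[OF g(1)] by (metis DiffD2 UnCI image_eqI)
      qed
      thus "\<rho> \<in> rem L \<sigma> - ((S - orbit G act \<sigma>) \<union> \<mu> ` (S - orbit G act \<sigma>))" using r by blast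
    qed
  qed
  thus ?thesis using c unfolding critical_def by simp
qed

lemma card_less: "card (S - orbit G act \<sigma>) < card S"
proof -
  have "finite S" using finite_subset[OF mS finL] .
  moreover have "\<sigma> \<in> S \<inter> orbit G act \<sigma>" using sS self_orbit[OF sV2] by blast
  moreover have "S - orbit G act \<sigma> \<subset> S" using calculation(2) by blast
  ultimately show ?thesis using psubset_card_mono by blast
qed

end

end

lemma rev_all:
  shows "\<And>L S \<mu>. card S = n \<Longrightarrow> cpx L \<Longrightarrow> partial_G_matching G act L S \<mu> \<Longrightarrow> acyclic_matching L S \<mu> \<Longrightarrow>
    critical L S \<mu> = K' \<Longrightarrow> simplicial_complex K' \<Longrightarrow> (elementary_G_collapse G act)\<^sup>*\<^sup>* L K'"
proof (induction n rule: less_induct)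
  case (less n L S \<mu>)
  show ?case
  proof (cases "S = {}")
    case True
    hence "L = K'" using less.prems(5) unfolding critical_def by simp
    thus ?thesis by simp
  next
    case False
    note P = less.prems(2) less.prems(3) less.prems(4) less.prems(5) less.prems(6) False
    obtain \<sigma> where sS: "\<sigma> \<in> S" and fr: "\<forall>\<tau>\<in>L. \<sigma> \<subset> \<tau> \<longrightarrow> \<tau> = \<mu> \<sigma>" using exists_free[OF P] by blast
    note Q = P sS fr
    have e: "elementary_G_collapse G act L (rem L \<sigma>)" using good_elem[OF less.prems(2) rev_good[OF Q]] .
    have "(elementary_G_collapse G act)\<^sup>*\<^sup>* (rem L \<sigma>) K'"
      using less.IH[OF _ refl cpx_rem[OF less.prems(2) rev_good[OF Q]] rev_matching[OF Q] rev_acyclic[OF Q]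
        rev_critical[OF Q] less.prems(6)] card_less[OF Q] less.prems(1) by blast
    thus ?thesis by (rule converse_rtranclp_into_rtranclp[of "elementary_G_collapse G act", OF e])
  qed
qed

end

theorem mainTheorem4:
  fixes G :: "('g, 'b) monoid_scheme" and act :: "'v \<Rightarrow> 'g \<Rightarrow> 'v"
    and K K' :: "'v set set"
  assumes "group G" and "finite (carrier G)"
    and "simplicial_G_complex G act K"
    and "G_subcomplex G act K K'"
  shows "G_collapses G act K K' \<longleftrightarrow>
    (\<exists>S \<mu>. partial_G_matching G act K S \<mu> \<and> acyclic_matching K S \<mu> \<and> critical K S \<mu> = K')"
proof -
  interpret gcx G act K by (rule gcx.intro[OF assms(1) assms(3)])
  have cK: "cpx K" unfolding cpx_def using assms(3) unfolding simplicial_G_complex_def by blast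
  have sK': "simplicial_complex K'" using assms(4) unfolding G_subcomplex_def by blast
  show ?thesis
  proof
    assume "G_collapses G act K K'"
    thus "\<exists>S \<mu>. partial_G_matching G act K S \<mu> \<and> acyclic_matching K S \<mu> \<and> critical K S \<mu> = K'"
      unfolding G_collapses_def using fwd cK by blast
  next
    assume "\<exists>S \<mu>. partial_G_matching G act K S \<mu> \<and> acyclic_matching K S \<mu> \<and> critical K S \<mu> = K'"
    then obtain S \<mu> where "partial_G_matching G act K S \<mu>" "acyclic_matching K S \<mu>" "critical K S \<mu> = K'" by blast
    thus "G_collapses G act K K'" unfolding G_collapses_def using rev_all[OF refl cK _ _ _ sK'] by blast
  qed
qed

end
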